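(* Let $0<\alpha<\beta<1$, let $\theta\in[0,1)$ and $\varphi\in V(\theta)$, and let $\theta_\varepsilon\in[0,1)$ satisfy $\theta_\varepsilon\to\theta$ as $\varepsilon\to0$. Then there exist $\varphi_\varepsilon\in V(\theta_\varepsilon)$ such that $\varphi_\varepsilon\to\varphi$ strongly in $H^1(0,1)$ as $\varepsilon\to0$.
   Context: Let $p$ be a $1$-periodic measurable function on $\mathbb{R}$ with $p>0$ and $p,p^{-1}\in L^\infty(0,1)$. Write $Q=(0,1)$, $Q_1=(0,\alpha)\cup(\beta,1)$. For $\theta\in[0,1)$, $H^1_\theta(Q)=\{u\in H^1(0,1):u(1)=e^{2\pi i\theta}u(0)\}$ (continuous representatives), and $V(\theta)=\{v\in H^1_\theta(Q): p(y)v'(y)=0\text{ for a.e. } y\in Q_1\}$. *)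

theory Defs
  imports "HOL-Analysis.Analysis"
begin

definition Q1 :: "real \<Rightarrow> real \<Rightarrow> real set" where
  "Q1 \<alpha> \<beta> = {0<..<\<alpha>} \<union> {\<beta><..<1}"

text \<open>g is a weak derivative (in L2(0,1)) of u on [0,1], u being the continuous
  representative: u is the integral of g.\<close>
definition H1_deriv :: "(real \<Rightarrow> complex) \<Rightarrow> (real \<Rightarrow> complex) \<Rightarrow> bool" where
  "H1_deriv u g \<longleftrightarrow>
     g \<in> borel_measurable lborel \<and>
     set_integrable lborel {0..1} (\<lambda>x. (cmod (g x))\<^sup>2) \<and>
     (\<forall>x\<in>{0..1}. u x = u 0 + (LINT t:{0..x}|lborel. g t))"

definition H1 :: "(real \<Rightarrow> complex) set" where
  "H1 = {u. \<exists>g. H1_deriv u g}"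

definition H1_theta :: "real \<Rightarrow> (real \<Rightarrow> complex) set" where
  "H1_theta \<theta> = {u \<in> H1. u 1 = exp (2 * pi * \<i> * complex_of_real \<theta>) * u 0}"

definition V :: "(real \<Rightarrow> real) \<Rightarrow> real \<Rightarrow> real \<Rightarrow> real \<Rightarrow> (real \<Rightarrow> complex) set" where
  "V p \<alpha> \<beta> \<theta> = {v \<in> H1_theta \<theta>. \<exists>g. H1_deriv v g \<and>
       (AE y in lborel. y \<in> Q1 \<alpha> \<beta> \<longrightarrow> complex_of_real (p y) * g y = 0)}"

definition H1_tendsto :: "(real \<Rightarrow> real \<Rightarrow> complex) \<Rightarrow> (real \<Rightarrow> complex) \<Rightarrow> bool" where
  "H1_tendsto U u \<longleftrightarrow>
     (\<exists>G g. (\<forall>\<epsilon>>0. H1_deriv (U \<epsilon>) (G \<epsilon>)) \<and> H1_deriv u g \<and>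
        ((\<lambda>\<epsilon>. LINT x:{0..1}|lborel. (cmod (U \<epsilon> x - u x))\<^sup>2 + (cmod (G \<epsilon> x - g x))\<^sup>2)
            \<longlongrightarrow> 0) (at_right 0))"

end

theory Submission imports Defs begin
lemma kint: fixes a b x :: real assumes "a < b"
  shows "set_integrable lborel {0..x} (\<lambda>t. complex_of_real (indicator {a..b} t / (b-a)))"
proof -
  have "integrable lborel (\<lambda>t. indicator ({0..x} \<inter> {a..b}) t *\<^sub>R complex_of_real (1 / (b-a)))"
    by (intro integrable_scaleR_left integrable_real_indicator)
       (auto simp: emeasure_lborel_Icc_eq intro: le_less_trans[OF emeasure_mono[of _ "{a..b}"]])
  moreover have "(\<lambda>t. indicator ({0..x} \<inter> {a..b}) t *\<^sub>R complex_of_real (1 / (b-a))) = (\<lambda>t. indicator {0..x} t *\<^sub>R complex_of_real (indicator {a..b} t / (b-a)))"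
    by (auto split: split_indicator)
  ultimately show ?thesis unfolding set_integrable_def by simp
qed
lemma kone: fixes a b :: real assumes "0 \<le> a" "a < b" "b \<le> 1"
  shows "(LINT t:{0..1}|lborel. complex_of_real (indicator {a..b} t / (b-a))) = 1"
proof -
  have "(LINT t:{0..1}|lborel. complex_of_real (indicator {a..b} t / (b-a))) = (LINT t:{a..b}|lborel. complex_of_real (1 / (b-a)))"
    unfolding set_lebesgue_integral_def using assms
    by (intro Bochner_Integration.integral_cong) (auto split: split_indicator)
  also have "\<dots> = 1" using assms by (subst set_integral_const) (auto simp: scaleR_conv_of_real)
  finally show ?thesis .
qed

lemma sq1: "(u::real) \<le> 1 + u\<^sup>2"
proof -
  have "0 \<le> (u - 1)\<^sup>2" by simp
  then show ?thesis unfolding power2_eq_square by (simp add: algebra_simps) (smt (verit) mult_nonneg_nonneg zero_le_square)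
qed
lemma sq2: "((u::real) + v) ^ 2 \<le> 2 * u ^ 2 + 2 * v ^ 2"
proof -
  have "0 \<le> (u - v)\<^sup>2" by simp
  then show ?thesis unfolding power2_eq_square by (simp add: algebra_simps)
qed

lemma const_int: "set_integrable lborel {0..1::real} (\<lambda>x. c::real)"
proof -
  have "integrable lborel (\<lambda>t. indicator {0..1::real} t *\<^sub>R c)"
    by (intro integrable_scaleR_left integrable_real_indicator) auto
  then show ?thesis unfolding set_integrable_def by simp
qed

lemma L2_L1:
  fixes g :: "real \<Rightarrow> complex"
  assumes "g \<in> borel_measurable lborel" "set_integrable lborel {0..1} (\<lambda>x. (cmod (g x))\<^sup>2)"
  shows "set_integrable lborel {0..1} g"
proof (rule set_integrable_bound[where f="\<lambda>x. 1 + (cmod (g x))\<^sup>2"])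
  show "set_integrable lborel {0..1} (\<lambda>x. 1 + (cmod (g x))\<^sup>2)"
    using const_int assms(2) by (rule set_integral_add)
  show "set_borel_measurable lborel {0..1} g" unfolding set_borel_measurable_def using assms(1) by measurable
  show "AE x in lborel. x \<in> {0..1} \<longrightarrow> norm (g x) \<le> norm (1 + (cmod (g x))\<^sup>2)"
  proof (intro AE_I2 impI)
    fix x
    have "cmod (g x) \<le> 1 + (cmod (g x))\<^sup>2"
      by (rule sq1)
    then show "norm (g x) \<le> norm (1 + (cmod (g x))\<^sup>2)" by simp
  qed
qed

lemma L2_add:
  fixes g :: "real \<Rightarrow> complex" and a b :: real and d :: complex
  assumes "g \<in> borel_measurable lborel" "set_integrable lborel {0..1} (\<lambda>x. (cmod (g x))\<^sup>2)" "a < b"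
  shows "set_integrable lborel {0..1} (\<lambda>x. (cmod (g x + d * complex_of_real (indicator {a..b} x / (b-a))))\<^sup>2)"
proof (rule set_integrable_bound[where f="\<lambda>x. 2 * (cmod (g x))\<^sup>2 + 2 * (cmod d / (b-a))\<^sup>2"])
  show "set_integrable lborel {0..1} (\<lambda>x. 2 * (cmod (g x))\<^sup>2 + 2 * (cmod d / (b-a))\<^sup>2)"
    using assms(2) const_int by (intro set_integral_add set_integrable_mult_right) auto
  show "set_borel_measurable lborel {0..1} (\<lambda>x. (cmod (g x + d * complex_of_real (indicator {a..b} x / (b-a))))\<^sup>2)"
    unfolding set_borel_measurable_def using assms(1) by measurable
  show "AE x in lborel. x \<in> {0..1} \<longrightarrow> norm ((cmod (g x + d * complex_of_real (indicator {a..b} x / (b-a))))\<^sup>2) \<le> norm (2 * (cmod (g x))\<^sup>2 + 2 * (cmod d / (b-a))\<^sup>2)"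
  proof (intro AE_I2 impI)
    fix x
    have k: "cmod (d * complex_of_real (indicator {a..b} x / (b-a))) \<le> cmod d / (b-a)"
    proof -
      have "cmod (complex_of_real b - complex_of_real a) = b - a"
        using assms(3) by (simp flip: of_real_diff)
      then show ?thesis using assms(3) by (auto simp: norm_mult norm_divide split: split_indicator)
    qed
    have "cmod (g x + d * complex_of_real (indicator {a..b} x / (b-a))) \<le> cmod (g x) + cmod d / (b-a)"
      by (rule order_trans[OF norm_triangle_ineq]) (use k in simp)
    moreover have "0 \<le> cmod (g x + d * complex_of_real (indicator {a..b} x / (b-a)))" by simp
    moreover have "(u + v) ^ 2 \<le> 2 * u ^ 2 + 2 * v ^ 2" for u v :: real
      by (rule sq2)
    ultimately have "(cmod (g x + d * complex_of_real (indicator {a..b} x / (b-a))))\<^sup>2 \<le> 2 * (cmod (g x))\<^sup>2 + 2 * (cmod d / (b-a))\<^sup>2"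
      by (meson order_trans power_mono)
    then show "norm ((cmod (g x + d * complex_of_real (indicator {a..b} x / (b-a))))\<^sup>2) \<le> norm (2 * (cmod (g x))\<^sup>2 + 2 * (cmod d / (b-a))\<^sup>2)"
      by simp
  qed
qed
theorem lemma2p2:
  fixes p :: "real \<Rightarrow> real" and \<alpha> \<beta> \<theta> :: real
    and \<theta>\<epsilon> :: "real \<Rightarrow> real" and \<phi> :: "real \<Rightarrow> complex"
  assumes p_meas: "p \<in> borel_measurable lborel"
    and p_per: "\<And>y. p (y + 1) = p y"
    and p_pos: "\<And>y. p y > 0"
    and p_bdd: "\<exists>M. AE y in lborel. y \<in> {0<..<1} \<longrightarrow> \<bar>p y\<bar> \<le> M"
    and p_inv_bdd: "\<exists>M. AE y in lborel. y \<in> {0<..<1} \<longrightarrow> \<bar>1 / p y\<bar> \<le> M"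
    and \<alpha>\<beta>: "0 < \<alpha>" "\<alpha> < \<beta>" "\<beta> < 1"
    and \<theta>: "0 \<le> \<theta>" "\<theta> < 1"
    and \<phi>: "\<phi> \<in> V p \<alpha> \<beta> \<theta>"
    and \<theta>\<epsilon>_range: "\<And>\<epsilon>. \<epsilon> > 0 \<Longrightarrow> 0 \<le> \<theta>\<epsilon> \<epsilon> \<and> \<theta>\<epsilon> \<epsilon> < 1"
    and \<theta>\<epsilon>_lim: "(\<theta>\<epsilon> \<longlongrightarrow> \<theta>) (at_right 0)"
  shows "\<exists>\<Phi> :: real \<Rightarrow> real \<Rightarrow> complex.
           (\<forall>\<epsilon>>0. \<Phi> \<epsilon> \<in> V p \<alpha> \<beta> (\<theta>\<epsilon> \<epsilon>)) \<and> H1_tendsto \<Phi> \<phi>"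
proof -
  from \<phi> obtain g where g: "H1_deriv \<phi> g"
    and gAE: "AE y in lborel. y \<in> Q1 \<alpha> \<beta> \<longrightarrow> complex_of_real (p y) * g y = 0"
    and \<phi>1: "\<phi> 1 = exp (2 * pi * \<i> * complex_of_real \<theta>) * \<phi> 0"
    unfolding V_def H1_theta_def by blast
  have gm: "g \<in> borel_measurable lborel" and g2: "set_integrable lborel {0..1} (\<lambda>x. (cmod (g x))\<^sup>2)"
    and g\<phi>: "\<And>x. x \<in> {0..1} \<Longrightarrow> \<phi> x = \<phi> 0 + (LINT t:{0..x}|lborel. g t)"
    using g unfolding H1_deriv_def by blast+
  have g1: "set_integrable lborel {0..1} g" using L2_L1[OF gm g2] .
  define k :: "real \<Rightarrow> complex" where "k t = complex_of_real (indicator {\<alpha>..\<beta>} t / (\<beta>-\<alpha>))" for t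
  define h where "h x = (LINT t:{0..x}|lborel. k t)" for x
  define d where "d \<epsilon> = (exp (2 * pi * \<i> * complex_of_real (\<theta>\<epsilon> \<epsilon>)) - exp (2 * pi * \<i> * complex_of_real \<theta>)) * \<phi> 0" for \<epsilon>
  define \<Phi> where "\<Phi> \<epsilon> x = \<phi> x + d \<epsilon> * h x" for \<epsilon> x
  define G where "G \<epsilon> t = g t + d \<epsilon> * k t" for \<epsilon> t
  have kint: "set_integrable lborel {0..x} k" for x unfolding k_def using kint \<alpha>\<beta> by auto
  have h0: "h 0 = 0"
  proof -
    have "(\<lambda>t. indicator {0..0::real} t *\<^sub>R k t) = (\<lambda>t. 0)"
      using \<alpha>\<beta> unfolding k_def by (auto simp: indicator_def)
    then show ?thesis unfolding h_def set_lebesgue_integral_def by simp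
  qed
  have h1: "h 1 = 1" unfolding h_def k_def using kone \<alpha>\<beta> by auto
  have km: "k \<in> borel_measurable lborel" unfolding k_def by measurable
  have HD: "H1_deriv (\<Phi> \<epsilon>) (G \<epsilon>)" for \<epsilon>
    unfolding H1_deriv_def
  proof (intro conjI ballI)
    show "G \<epsilon> \<in> borel_measurable lborel" unfolding G_def using gm km by measurable
    show "set_integrable lborel {0..1} (\<lambda>x. (cmod (G \<epsilon> x))\<^sup>2)"
      unfolding G_def k_def using L2_add[OF gm g2 \<alpha>\<beta>(2)] by simp
    fix x :: real assume x: "x \<in> {0..1}"
    have gx: "set_integrable lborel {0..x} g"
      by (rule set_integrable_subset[OF g1]) (use x in auto)
    have "(LINT t:{0..x}|lborel. G \<epsilon> t) = (LINT t:{0..x}|lborel. g t) + d \<epsilon> * h x"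
      unfolding G_def h_def using gx kint[of x] by (subst set_integral_add(2)) auto
    then show "\<Phi> \<epsilon> x = \<Phi> \<epsilon> 0 + (LINT t:{0..x}|lborel. G \<epsilon> t)"
      unfolding \<Phi>_def using g\<phi>[OF x] h0 by simp
  qed
  have "\<Phi> \<epsilon> \<in> V p \<alpha> \<beta> (\<theta>\<epsilon> \<epsilon>)" for \<epsilon>
    unfolding V_def H1_theta_def H1_def
  proof (intro CollectI conjI exI)
    show "H1_deriv (\<Phi> \<epsilon>) (G \<epsilon>)" by (rule HD)
    show "H1_deriv (\<Phi> \<epsilon>) (G \<epsilon>)" by (rule HD)
    show "\<Phi> \<epsilon> 1 = exp (2 * pi * \<i> * complex_of_real (\<theta>\<epsilon> \<epsilon>)) * \<Phi> \<epsilon> 0"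
      unfolding \<Phi>_def d_def using h0 h1 \<phi>1 by (simp add: algebra_simps)
    show "AE y in lborel. y \<in> Q1 \<alpha> \<beta> \<longrightarrow> complex_of_real (p y) * G \<epsilon> y = 0"
      using gAE
    proof (rule AE_mp, intro AE_I2 impI)
      fix y assume 1: "y \<in> Q1 \<alpha> \<beta> \<longrightarrow> complex_of_real (p y) * g y = 0" and y: "y \<in> Q1 \<alpha> \<beta>"
      have "k y = 0" using y unfolding k_def Q1_def by (auto simp: indicator_def)
      then show "complex_of_real (p y) * G \<epsilon> y = 0" using 1 y unfolding G_def by simp
    qed
  qed
  moreover have "H1_tendsto \<Phi> \<phi>"
    unfolding H1_tendsto_def
  proof (intro exI conjI allI impI)
    show "H1_deriv (\<Phi> \<epsilon>) (G \<epsilon>)" for \<epsilon> by (rule HD)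
    show "H1_deriv \<phi> g" by (rule g)
    define C where "C = (LINT x:{0..1}|lborel. (cmod (h x))\<^sup>2 + (cmod (k x))\<^sup>2)"
    have eq: "(LINT x:{0..1}|lborel. (cmod (\<Phi> \<epsilon> x - \<phi> x))\<^sup>2 + (cmod (G \<epsilon> x - g x))\<^sup>2)
       = (cmod (d \<epsilon>))\<^sup>2 * C" for \<epsilon>
    proof -
      have "(LINT x:{0..1}|lborel. (cmod (\<Phi> \<epsilon> x - \<phi> x))\<^sup>2 + (cmod (G \<epsilon> x - g x))\<^sup>2)
          = (LINT x:{0..1}|lborel. (cmod (d \<epsilon>))\<^sup>2 * ((cmod (h x))\<^sup>2 + (cmod (k x))\<^sup>2))"
        unfolding \<Phi>_def G_def by (simp add: norm_mult power_mult_distrib algebra_simps)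
      then show ?thesis unfolding C_def by simp
    qed
    have "(d \<longlongrightarrow> (exp (2 * pi * \<i> * complex_of_real \<theta>) - exp (2 * pi * \<i> * complex_of_real \<theta>)) * \<phi> 0) (at_right 0)"
      unfolding d_def by (intro tendsto_intros \<theta>\<epsilon>_lim)
    then have "(d \<longlongrightarrow> 0) (at_right 0)" by simp
    then have "((\<lambda>\<epsilon>. (cmod (d \<epsilon>))\<^sup>2 * C) \<longlongrightarrow> (cmod 0)\<^sup>2 * C) (at_right 0)"
      by (intro tendsto_intros)
    then show "((\<lambda>\<epsilon>. LINT x:{0..1}|lborel. (cmod (\<Phi> \<epsilon> x - \<phi> x))\<^sup>2 + (cmod (G \<epsilon> x - g x))\<^sup>2) \<longlongrightarrow> 0) (at_right 0)"
      unfolding eq by simp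
  qed
  ultimately show ?thesis by blast
qed
end
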